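(* For $n\geq 4$ and $m\in\{3,\dots,n-1\}$, the algebra $\mathtt{A}_n^{\{m\}}$ has infinite representation type.
   Context: $\Bbbk$ is an algebraically closed field; arrows compose right to left. $\mathtt{A}_n$ is the algebra of the quiver with vertices $1,\dots,n$, arrows $a_i:i\to i+1$, $b_i:i+1\to i$ ($1\le i\le n-1$), relations $a_ib_i=b_{i+1}a_{i+1}$ ($1\le i\le n-2$), $a_{n-1}b_{n-1}=0$. For $X\subset\{2,\dots,n\}$, $e_X$ is the sum of primitive idempotents for vertices in $\{1\}\cup X$ and $\mathtt{A}_n^X=e_X\mathtt{A}_ne_X$. *)

theory Defs
  imports "Jordan_Normal_Form.Matrix" "HOL-Computational_Algebra.Polynomial"
begin

text \<open>Arrows of the quiver of A_n: (True, i) is a_i : i -> i+1, (False, i) is b_i : i+1 -> i.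
  A path is a pair (s, xs): start vertex s and the list of arrows, in the order they are
  traversed (the first list element is applied first).\<close>

type_synonym arrow = "bool \<times> nat"
type_synonym qpath = "nat \<times> arrow list"

definition arr_ok :: "nat \<Rightarrow> arrow \<Rightarrow> bool" where
  "arr_ok n x = (1 \<le> snd x \<and> snd x \<le> n - 1)"

definition arr_src :: "arrow \<Rightarrow> nat" where
  "arr_src x = (if fst x then snd x else snd x + 1)"

definition arr_tgt :: "arrow \<Rightarrow> nat" where
  "arr_tgt x = (if fst x then snd x + 1 else snd x)"

fun walk :: "nat \<Rightarrow> nat \<Rightarrow> arrow list \<Rightarrow> bool" where
  "walk n v [] = (1 \<le> v \<and> v \<le> n)"
| "walk n v (x # xs) = (1 \<le> v \<and> v \<le> n \<and> arr_ok n x \<and> arr_src x = v \<and> walk n (arr_tgt x) xs)"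

fun walk_end :: "nat \<Rightarrow> arrow list \<Rightarrow> nat" where
  "walk_end v [] = v"
| "walk_end v (x # xs) = walk_end (arr_tgt x) xs"

definition psrc :: "qpath \<Rightarrow> nat" where "psrc p = fst p"
definition ptgt :: "qpath \<Rightarrow> nat" where "ptgt p = walk_end (fst p) (snd p)"

text \<open>Valid paths of the quiver of A_n whose source and target lie in the vertex set I
  (these span e_I (kQ) e_I).\<close>
definition vpath :: "nat \<Rightarrow> nat set \<Rightarrow> qpath \<Rightarrow> bool" where
  "vpath n I p = (walk n (fst p) (snd p) \<and> psrc p \<in> I \<and> ptgt p \<in> I)"

definition idem_set :: "nat set \<Rightarrow> nat set" where
  "idem_set X = insert 1 X"

text \<open>A finite-dimensional (left) module over A_n^X = e_X A_n e_X, given by the spaces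
  e_i M = K^(d i) for i in {1} \<union> X and the action rho p : K^(d (psrc p)) -> K^(d (ptgt p))
  of each path p with endpoints in {1} \<union> X. The action must be unital, multiplicative,
  and kill the ideal generated by the relations a_i b_i = b_(i+1) a_(i+1) (1 \<le> i \<le> n-2)
  and a_(n-1) b_(n-1) = 0 (equivalently: kill every u r v with u, v paths and r a relation).\<close>
definition is_rep :: "nat \<Rightarrow> nat set \<Rightarrow> (nat \<Rightarrow> nat) \<times> (qpath \<Rightarrow> 'a::field mat) \<Rightarrow> bool" where
  "is_rep n X R = (let I = idem_set X; d = fst R; \<rho> = snd R in
     (\<forall>p. vpath n I p \<longrightarrow> \<rho> p \<in> carrier_mat (d (ptgt p)) (d (psrc p)))
   \<and> (\<forall>i\<in>I. \<rho> (i, []) = 1\<^sub>m (d i))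
   \<and> (\<forall>s xs ys. vpath n I (s, xs) \<longrightarrow> vpath n I (walk_end s xs, ys) \<longrightarrow>
         \<rho> (s, xs @ ys) = \<rho> (walk_end s xs, ys) * \<rho> (s, xs))
   \<and> (\<forall>s us vs i. 1 \<le> i \<and> i \<le> n - 2 \<longrightarrow>
         vpath n I (s, us @ [(False, i), (True, i)] @ vs) \<longrightarrow>
         vpath n I (s, us @ [(True, i + 1), (False, i + 1)] @ vs) \<longrightarrow>
         \<rho> (s, us @ [(False, i), (True, i)] @ vs) = \<rho> (s, us @ [(True, i + 1), (False, i + 1)] @ vs))
   \<and> (\<forall>s us vs. vpath n I (s, us @ [(False, n - 1), (True, n - 1)] @ vs) \<longrightarrow>
         \<rho> (s, us @ [(False, n - 1), (True, n - 1)] @ vs) =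
           0\<^sub>m (d (ptgt (s, us @ [(False, n - 1), (True, n - 1)] @ vs))) (d s)))"

definition rep_iso :: "nat \<Rightarrow> nat set \<Rightarrow> (nat \<Rightarrow> nat) \<times> (qpath \<Rightarrow> 'a::field mat)
    \<Rightarrow> (nat \<Rightarrow> nat) \<times> (qpath \<Rightarrow> 'a mat) \<Rightarrow> bool" where
  "rep_iso n X R S = (\<exists>\<phi>. (\<forall>i\<in>idem_set X. \<phi> i \<in> carrier_mat (fst S i) (fst R i) \<and> invertible_mat (\<phi> i))
     \<and> (\<forall>p. vpath n (idem_set X) p \<longrightarrow> \<phi> (ptgt p) * snd R p = snd S p * \<phi> (psrc p)))"

definition rep_sum :: "(nat \<Rightarrow> nat) \<times> (qpath \<Rightarrow> 'a::field mat)
    \<Rightarrow> (nat \<Rightarrow> nat) \<times> (qpath \<Rightarrow> 'a mat) \<Rightarrow> (nat \<Rightarrow> nat) \<times> (qpath \<Rightarrow> 'a mat)" where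
  "rep_sum R S = ((\<lambda>i. fst R i + fst S i),
     (\<lambda>p. four_block_mat (snd R p) (0\<^sub>m (fst R (ptgt p)) (fst S (psrc p)))
                         (0\<^sub>m (fst S (ptgt p)) (fst R (psrc p))) (snd S p)))"

definition rep_nonzero :: "nat set \<Rightarrow> (nat \<Rightarrow> nat) \<times> (qpath \<Rightarrow> 'a mat) \<Rightarrow> bool" where
  "rep_nonzero X R = (\<exists>i\<in>idem_set X. fst R i > 0)"

definition indecomposable :: "nat \<Rightarrow> nat set \<Rightarrow> (nat \<Rightarrow> nat) \<times> (qpath \<Rightarrow> 'a::field mat) \<Rightarrow> bool" where
  "indecomposable n X R = (is_rep n X R \<and> rep_nonzero X R \<and>
     \<not> (\<exists>R1 R2. is_rep n X R1 \<and> is_rep n X R2 \<and> rep_nonzero X R1 \<and> rep_nonzero X R2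
                \<and> rep_iso n X R (rep_sum R1 R2)))"

definition infinite_rep_type :: "'a::field itself \<Rightarrow> nat \<Rightarrow> nat set \<Rightarrow> bool" where
  "infinite_rep_type TYPE('a) n X = (\<not> (\<exists>F :: ((nat \<Rightarrow> nat) \<times> (qpath \<Rightarrow> 'a mat)) set.
      finite F \<and> (\<forall>R. indecomposable n X R \<longrightarrow> (\<exists>S\<in>F. rep_iso n X R S))))"

definition alg_closed :: "'a::field itself \<Rightarrow> bool" where
  "alg_closed TYPE('a) = (\<forall>p :: 'a poly. degree p > 0 \<longrightarrow> (\<exists>x. poly p x = 0))"

end

theory Submission
  imports Defs
begin

lemma walk_bounds: "walk n v xs \<Longrightarrow> 1 \<le> v \<and> v \<le> n"
  by (cases xs) auto

lemma walk_append: "walk n v (xs @ ys) = (walk n v xs \<and> walk n (walk_end v xs) ys)"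
  by (induction xs arbitrary: v) (auto dest: walk_bounds)

lemma walk_end_append: "walk_end v (xs @ ys) = walk_end (walk_end v xs) ys"
  by (induction xs arbitrary: v) auto

lemma walk_dist: "walk n v xs \<Longrightarrow> v \<le> walk_end v xs + length xs \<and> walk_end v xs \<le> v + length xs
   \<and> even (length xs + v + walk_end v xs)"
proof (induction xs arbitrary: v)
  case Nil then show ?case by auto
next
  case (Cons x xs)
  then have h: "walk n (arr_tgt x) xs" and s: "arr_src x = v" by auto
  from Cons.IH[OF h] s show ?case
    by (cases x) (auto simp: arr_src_def arr_tgt_def split: if_splits)
qed

lemma walk_up: "1 \<le> i \<Longrightarrow> i \<le> k \<Longrightarrow> k \<le> n \<Longrightarrow>
  walk n i (map (\<lambda>j. (True, j)) [i..<k]) \<and> walk_end i (map (\<lambda>j. (True, j)) [i..<k]) = k"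
proof (induction k)
  case 0 then show ?case by auto
next
  case (Suc k)
  show ?case
  proof (cases "i = Suc k")
    case True then show ?thesis using Suc by auto
  next
    case False
    then have "i \<le> k" using Suc by auto
    with Suc have ih: "walk n i (map (\<lambda>j. (True, j)) [i..<k]) \<and> walk_end i (map (\<lambda>j. (True, j)) [i..<k]) = k" by auto
    have e: "map (\<lambda>j. (True, j)) [i..<Suc k] = map (\<lambda>j. (True, j)) [i..<k] @ [(True, k)]"
      using \<open>i \<le> k\<close> by auto
    show ?thesis unfolding e walk_append walk_end_append using ih Suc \<open>i \<le> k\<close>
      by (auto simp: arr_ok_def arr_src_def arr_tgt_def)
  qed
qed

lemma walk_down: "1 \<le> i \<Longrightarrow> i \<le> k \<Longrightarrow> k \<le> n \<Longrightarrow>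
  walk n k (map (\<lambda>j. (False, j)) (rev [i..<k])) \<and> walk_end k (map (\<lambda>j. (False, j)) (rev [i..<k])) = i"
proof (induction k)
  case 0 then show ?case by auto
next
  case (Suc k)
  show ?case
  proof (cases "i = Suc k")
    case True then show ?thesis using Suc by auto
  next
    case False
    then have "i \<le> k" using Suc by auto
    with Suc have ih: "walk n k (map (\<lambda>j. (False, j)) (rev [i..<k])) \<and> walk_end k (map (\<lambda>j. (False, j)) (rev [i..<k])) = i" by auto
    have e: "map (\<lambda>j. (False, j)) (rev [i..<Suc k]) = (False, k) # map (\<lambda>j. (False, j)) (rev [i..<k])"
      using \<open>i \<le> k\<close> by auto
    show ?thesis unfolding e using ih Suc \<open>i \<le> k\<close>
      by (auto simp: arr_ok_def arr_src_def arr_tgt_def)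
  qed
qed

definition Nm :: "'a::field \<Rightarrow> 'a mat" where
  "Nm c = mat 2 2 (\<lambda>(i,j). if i = 1 \<and> j = 0 then c else 0)"

definition gsc :: "nat \<Rightarrow> 'a::field \<Rightarrow> nat \<Rightarrow> nat \<Rightarrow> nat \<Rightarrow> 'a" where
  "gsc m c s t L = (if s = m \<and> t = 1 \<and> L = m - 1 then c
     else if (s = t \<and> L = 2) \<or> (s = 1 \<and> t = m \<and> L = m - 1) then 1 else 0)"

definition rho :: "nat \<Rightarrow> 'a::field \<Rightarrow> qpath \<Rightarrow> 'a mat" where
  "rho m c p = (if snd p = [] then 1\<^sub>m 2 else Nm (gsc m c (psrc p) (ptgt p) (length (snd p))))"

definition Rfam :: "nat \<Rightarrow> 'a::field \<Rightarrow> (nat \<Rightarrow> nat) \<times> (qpath \<Rightarrow> 'a mat)" where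
  "Rfam m c = ((\<lambda>_. 2), rho m c)"

lemma Nm_carrier[simp]: "Nm c \<in> carrier_mat 2 2"
  by (simp add: Nm_def)

lemma Nm_dims[simp]: "dim_row (Nm c) = 2" "dim_col (Nm c) = 2"
  by (auto simp: Nm_def)

lemma Nm_mult: "Nm c * Nm d = Nm 0"
  by (rule eq_matI) (auto simp: Nm_def scalar_prod_def eval_nat_numeral)

lemma Nm_zero: "Nm 0 = 0\<^sub>m 2 2"
  by (rule eq_matI) (auto simp: Nm_def)

lemma rho_carrier[simp]: "rho m c p \<in> carrier_mat 2 2"
  by (simp add: rho_def)

lemma len_I: assumes "walk n a xs" "xs \<noteq> []" "a \<in> {1, m}" "walk_end a xs \<in> {1, m}" "m \<ge> 3"
  shows "length xs \<ge> 2 \<and> (a \<noteq> walk_end a xs \<longrightarrow> length xs \<ge> m - 1)"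
proof -
  have p: "length xs > 0" using assms(2) by auto
  note d = walk_dist[OF assms(1)]
  have "length xs \<ge> 2"
  proof (cases "a = walk_end a xs")
    case True
    then have "even (length xs)" using d by auto
    with p show ?thesis by presburger
  next
    case False
    then have "length xs \<ge> m - 1" using d assms(3,4) by auto
    then show ?thesis using assms(5) by auto
  qed
  moreover have "a \<noteq> walk_end a xs \<longrightarrow> length xs \<ge> m - 1" using d assms(3,4) by auto
  ultimately show ?thesis by auto
qed

lemma Rfam_rep: assumes "3 \<le> m" "m \<le> n - 1"
  shows "is_rep n {m} (Rfam m c)"
proof -
  have I: "idem_set {m} = {1, m}" by (simp add: idem_set_def)
  have A: "\<forall>p. vpath n {1,m} p \<longrightarrow> rho m c p \<in> carrier_mat 2 2" by simp
  have B: "\<forall>i\<in>{1,m}. rho m c (i, []) = 1\<^sub>m 2" by (simp add: rho_def)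
  have C: "rho m c (s, xs @ ys) = rho m c (walk_end s xs, ys) * rho m c (s, xs)"
    if v1: "vpath n {1,m} (s, xs)" and v2: "vpath n {1,m} (walk_end s xs, ys)" for s xs ys
  proof (cases "xs = [] \<or> ys = []")
    case True then show ?thesis by (auto simp: rho_def)
  next
    case False
    let ?t = "walk_end s xs" let ?u = "walk_end ?t ys"
    have w1: "walk n s xs" "s \<in> {1,m}" "?t \<in> {1,m}" using v1 by (auto simp: vpath_def psrc_def ptgt_def)
    have w2: "walk n ?t ys" "?u \<in> {1,m}" using v2 by (auto simp: vpath_def psrc_def ptgt_def)
    have l1: "length xs \<ge> 2 \<and> (s \<noteq> ?t \<longrightarrow> length xs \<ge> m - 1)"
      using len_I[OF w1(1)] False w1 assms by auto
    have l2: "length ys \<ge> 2 \<and> (?t \<noteq> ?u \<longrightarrow> length ys \<ge> m - 1)"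
      using len_I[OF w2(1)] False w1 w2 assms by auto
    have g: "gsc m c s ?u (length xs + length ys) = 0"
      using l1 l2 w1 w2 assms unfolding gsc_def by auto
    show ?thesis using False g
      by (simp add: rho_def psrc_def ptgt_def walk_end_append Nm_mult)
  qed
  have D: "rho m c (s, us @ [(False, i), (True, i)] @ vs) = rho m c (s, us @ [(True, i + 1), (False, i + 1)] @ vs)"
    for s us vs i
    by (simp add: rho_def psrc_def ptgt_def walk_end_append arr_tgt_def)
  have E: "rho m c (s, us @ [(False, n - 1), (True, n - 1)] @ vs) = 0\<^sub>m 2 2"
    if v: "vpath n {1,m} (s, us @ [(False, n - 1), (True, n - 1)] @ vs)" for s us vs
  proof -
    let ?u = "walk_end s us"
    have w: "walk n s us" "walk n ?u ([(False, n - 1), (True, n - 1)] @ vs)" "s \<in> {1,m}"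
      "walk_end (walk_end ?u [(False, n - 1), (True, n - 1)]) vs \<in> {1,m}"
      using v by (auto simp: vpath_def psrc_def ptgt_def walk_append walk_end_append)
    have un: "?u = n" using w(2) assms by (auto simp: arr_src_def)
    have e2: "walk_end ?u [(False, n - 1), (True, n - 1)] = n" using assms by (simp add: arr_tgt_def)
    have wv: "walk n n vs" using w(2) un assms by (auto simp: arr_src_def arr_tgt_def)
    note d1 = walk_dist[OF w(1)]
    note d2 = walk_dist[OF wv]
    have g: "gsc m c s (walk_end n vs) (length us + 2 + length vs) = 0"
      using d1 d2 un w(3) w(4) e2 assms unfolding gsc_def by auto
    have e3: "arr_tgt (True, n - Suc 0) = n" using assms by (simp add: arr_tgt_def)
    show ?thesis using g
      by (simp add: rho_def psrc_def ptgt_def walk_end_append e2 un Nm_zero e3)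
  qed
  show ?thesis unfolding is_rep_def Let_def I Rfam_def fst_conv snd_conv
    using A B C D E by (auto simp: ptgt_def)
qed

lemma mult_Nm_right: "C \<in> carrier_mat 2 2 \<Longrightarrow> i < 2 \<Longrightarrow> j < 2 \<Longrightarrow>
   (C * Nm d) $$ (i,j) = (if j = 0 then C $$ (i,1) * d else 0)"
  by (auto simp: Nm_def scalar_prod_def eval_nat_numeral)

lemma mult_Nm_left: "C \<in> carrier_mat 2 2 \<Longrightarrow> i < 2 \<Longrightarrow> j < 2 \<Longrightarrow>
   (Nm d * C) $$ (i,j) = (if i = 1 then d * C $$ (0,j) else 0)"
  by (auto simp: Nm_def scalar_prod_def eval_nat_numeral)

lemma endo_form:
  fixes C1 Cm :: "'a::field mat"
  assumes c: "C1 \<in> carrier_mat 2 2" "Cm \<in> carrier_mat 2 2"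
    and x: "C1 * Nm 1 = Nm 1 * C1" and y: "Cm * Nm 1 = Nm 1 * Cm" and a: "Cm * Nm 1 = Nm 1 * C1"
  shows "C1 $$ (0,1) = 0 \<and> C1 $$ (1,1) = C1 $$ (0,0) \<and> Cm $$ (0,1) = 0
     \<and> Cm $$ (0,0) = C1 $$ (0,0) \<and> Cm $$ (1,1) = C1 $$ (0,0)"
proof -
  have x1: "(C1 * Nm 1) $$ (i,j) = (Nm 1 * C1) $$ (i,j)" for i j using x by simp
  have y1: "(Cm * Nm 1) $$ (i,j) = (Nm 1 * Cm) $$ (i,j)" for i j using y by simp
  have a1: "(Cm * Nm 1) $$ (i,j) = (Nm 1 * C1) $$ (i,j)" for i j using a by simp
  note L = mult_Nm_right[OF c(1)] mult_Nm_right[OF c(2)] mult_Nm_left[OF c(1)] mult_Nm_left[OF c(2)]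
  have "C1 $$ (0,1) = 0" using x1[of 0 0] by (simp add: L)
  moreover have "C1 $$ (1,1) = C1 $$ (0,0)" using x1[of 1 0] by (simp add: L)
  moreover have "Cm $$ (0,1) = 0" using y1[of 0 0] by (simp add: L)
  moreover have "Cm $$ (1,1) = C1 $$ (0,0)" using a1[of 1 0] by (simp add: L)
  moreover have "Cm $$ (1,1) = Cm $$ (0,0)" using y1[of 1 0] by (simp add: L)
  ultimately show ?thesis by simp
qed

lemma beta_eq:
  fixes C1 Cm :: "'a::field mat"
  assumes c: "C1 \<in> carrier_mat 2 2" "Cm \<in> carrier_mat 2 2"
    and b: "C1 * Nm d = Nm e * Cm"
  shows "C1 $$ (1,1) * d = e * Cm $$ (0,0)"
proof -
  have "(C1 * Nm d) $$ (1,0) = (Nm e * Cm) $$ (1,0)" using b by simp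
  then show ?thesis by (simp add: mult_Nm_right[OF c(1)] mult_Nm_left[OF c(2)])
qed

lemma idem_form:
  fixes E :: "'a::field mat"
  assumes c: "E \<in> carrier_mat 2 2" and i: "E * E = E"
    and f: "E $$ (0,1) = 0" "E $$ (1,1) = E $$ (0,0)"
  shows "(E $$ (0,0) = 0 \<and> E = 0\<^sub>m 2 2) \<or> (E $$ (0,0) = 1 \<and> E = 1\<^sub>m 2)"
proof -
  have e: "(E * E) $$ (k,l) = E $$ (k,l)" for k l using i by simp
  have m: "k < 2 \<Longrightarrow> l < 2 \<Longrightarrow> (E * E) $$ (k,l) = E $$ (k,0) * E $$ (0,l) + E $$ (k,1) * E $$ (1,l)" for k l
    using c by (auto simp: scalar_prod_def eval_nat_numeral)
  have e00: "E $$ (0,0) * E $$ (0,0) = E $$ (0,0)" using e[of 0 0] m[of 0 0] f by simp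
  have e10: "E $$ (1,0) * E $$ (0,0) + E $$ (0,0) * E $$ (1,0) = E $$ (1,0)" using e[of 1 0] m[of 1 0] f by simp
  have "E $$ (0,0) = 0 \<or> E $$ (0,0) = 1" using e00
    by (metis mult_cancel_right1 mult_eq_0_iff)
  then show ?thesis
  proof
    assume a: "E $$ (0,0) = 0"
    then have "E $$ (1,0) = 0" using e10 by simp
    then have "E = 0\<^sub>m 2 2" using a f c
      by (intro eq_matI) (auto simp: less_2_cases_iff)
    then show ?thesis using a by simp
  next
    assume a: "E $$ (0,0) = 1"
    then have "E $$ (1,0) + E $$ (1,0) = E $$ (1,0)" using e10 by simp
    then have "E $$ (1,0) = 0" by (metis add_cancel_right_right)
    then have "E = 1\<^sub>m 2" using a f c
      by (intro eq_matI) (auto simp: less_2_cases_iff)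
    then show ?thesis using a by simp
  qed
qed

lemma inv_obtain:
  fixes A :: "'a::field mat"
  assumes "invertible_mat A" "A \<in> carrier_mat k l"
  shows "k = l \<and> (\<exists>B \<in> carrier_mat k k. A * B = 1\<^sub>m k \<and> B * A = 1\<^sub>m k)"
proof -
  have sq: "dim_row A = dim_col A" and "\<exists>B. A * B = 1\<^sub>m (dim_row A) \<and> B * A = 1\<^sub>m (dim_row B)"
    using assms(1) unfolding invertible_mat_def inverts_mat_def square_mat.simps by auto
  then obtain B where ab: "A * B = 1\<^sub>m (dim_row A)" and ba: "B * A = 1\<^sub>m (dim_row B)" by blast
  have kl: "k = l" using sq assms by auto
  have "dim_col (A * B) = dim_col (1\<^sub>m (dim_row A) :: 'a mat)" using ab by simp
  then have "dim_col B = k" using assms by simp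
  moreover have "dim_col (B * A) = dim_col (1\<^sub>m (dim_row B) :: 'a mat)" using ba by simp
  then have "dim_row B = k" using assms kl by simp
  ultimately show ?thesis using kl ab ba assms by auto
qed

lemma mc22: "A \<in> carrier_mat 2 2 \<Longrightarrow> B \<in> carrier_mat 2 2 \<Longrightarrow> A * B \<in> carrier_mat 2 2"
  by (rule mult_carrier_mat)

lemma assoc22: "A \<in> carrier_mat 2 2 \<Longrightarrow> B \<in> carrier_mat 2 2 \<Longrightarrow> C \<in> carrier_mat 2 2 \<Longrightarrow> A * B * C = A * (B * C)"
  by (rule assoc_mult_mat)

lemma cancel2:
  fixes A B M :: "'a::field mat"
  assumes "A \<in> carrier_mat 2 2" "B \<in> carrier_mat 2 2" "M \<in> carrier_mat 2 2" "A * B = 1\<^sub>m 2"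
  shows "A * (B * M) = M"
proof -
  have "A * (B * M) = (A * B) * M" by (rule assoc22[symmetric, OF assms(1-3)])
  also have "\<dots> = M" unfolding assms(4) using assms(3) by simp
  finally show ?thesis .
qed

lemma conj_endo:
  fixes Ft Fs Bt Bs Pt Ps X S :: "'a::field mat"
  assumes c: "Ft \<in> carrier_mat 2 2" "Fs \<in> carrier_mat 2 2" "Bt \<in> carrier_mat 2 2" "Bs \<in> carrier_mat 2 2"
     "Pt \<in> carrier_mat 2 2" "Ps \<in> carrier_mat 2 2" "X \<in> carrier_mat 2 2" "S \<in> carrier_mat 2 2"
   and h: "Ft * X = S * Fs" "Bt * Ft = 1\<^sub>m 2" "Ft * Bt = 1\<^sub>m 2" "Fs * Bs = 1\<^sub>m 2" "Pt * S = S * Ps"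
  shows "(Bt * Pt * Ft) * X = X * (Bs * Ps * Fs)"
proof -
  have X: "X = Bt * (S * Fs)"
  proof -
    have "X = (Bt * Ft) * X" using h(2) c(7) by simp
    also have "\<dots> = Bt * (Ft * X)" using c by (simp add: mc22 assoc22)
    finally show ?thesis using h(1) by simp
  qed
  have c1: "Ft * (Bt * M) = M" if "M \<in> carrier_mat 2 2" for M using cancel2[OF c(1,3) that h(3)] .
  have c2: "Fs * (Bs * M) = M" if "M \<in> carrier_mat 2 2" for M using cancel2[OF c(2,4) that h(4)] .
  have h5: "Pt * (S * M) = S * (Ps * M)" if "M \<in> carrier_mat 2 2" for M
  proof -
    have "Pt * (S * M) = (Pt * S) * M" using c that by (simp add: mc22 assoc22)
    also have "\<dots> = S * (Ps * M)" unfolding h(5) using c that by (simp add: mc22 assoc22)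
    finally show ?thesis .
  qed
  have "(Bt * Pt * Ft) * X = Bt * (Pt * (Ft * (Bt * (S * Fs))))"
    unfolding X using c by (simp add: mc22 assoc22)
  also have "\<dots> = Bt * (S * (Ps * Fs))" using c by (simp add: c1 h5)
  also have "\<dots> = Bt * (S * (Fs * (Bs * (Ps * Fs))))" using c by (simp add: c2)
  also have "\<dots> = X * (Bs * Ps * Fs)" unfolding X using c by (simp add: mc22 assoc22)
  finally show ?thesis .
qed

lemma conj_iso:
  fixes Ft Fs Gt Gs Bt Bs X Y T :: "'a::field mat"
  assumes c: "Ft \<in> carrier_mat 2 2" "Fs \<in> carrier_mat 2 2" "Gt \<in> carrier_mat 2 2" "Gs \<in> carrier_mat 2 2"
     "Bt \<in> carrier_mat 2 2" "Bs \<in> carrier_mat 2 2" "X \<in> carrier_mat 2 2" "Y \<in> carrier_mat 2 2" "T \<in> carrier_mat 2 2"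
   and h: "Ft * X = T * Fs" "Gt * Y = T * Gs" "Bt * Ft = 1\<^sub>m 2" "Fs * Bs = 1\<^sub>m 2"
  shows "(Bt * Gt) * Y = X * (Bs * Gs)"
proof -
  have X: "X = Bt * (T * Fs)"
  proof -
    have "X = (Bt * Ft) * X" using h(3) c(7) by simp
    also have "\<dots> = Bt * (Ft * X)" using c by (simp add: mc22 assoc22)
    finally show ?thesis using h(1) by simp
  qed
  have c2: "Fs * (Bs * M) = M" if "M \<in> carrier_mat 2 2" for M using cancel2[OF c(2,6) that h(4)] .
  have "(Bt * Gt) * Y = Bt * (T * Gs)" using c h by (simp add: h(2)[symmetric])
  also have "\<dots> = Bt * (T * (Fs * (Bs * Gs)))" using c by (simp add: c2)
  also have "\<dots> = X * (Bs * Gs)" unfolding X using c by (simp add: mc22 assoc22)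
  finally show ?thesis .
qed

lemma alg_closed_infinite:
  assumes "alg_closed TYPE('a::field)"
  shows "infinite (UNIV :: 'a set)"
proof
  assume fin: "finite (UNIV :: 'a set)"
  define q :: "'a poly" where "q = (\<Prod>a\<in>UNIV. [:- a, 1:])"
  have dq: "degree q = card (UNIV :: 'a set)"
    unfolding q_def by (subst degree_prod_eq_sum_degree) auto
  have "card (UNIV :: 'a set) > 0" using fin by (simp add: card_gt_0_iff)
  then have d: "degree (1 + q) > 0" using dq by (subst degree_add_eq_right) auto
  obtain x where "poly (1 + q) x = 0" using assms d unfolding alg_closed_def by blast
  moreover have "poly q x = 0" unfolding q_def poly_prod using fin
    by (simp add: prod_zero_iff)
  ultimately show False by simp
qed

lemma paths:
  assumes "3 \<le> m" "m \<le> n - 1"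
  shows "vpath n {1,m} (1, [(True,1),(False,1)]) \<and> rho m c (1, [(True,1),(False,1)]) = Nm 1
     \<and> psrc (1, [(True,1),(False,1)]) = 1 \<and> ptgt (1, [(True,1),(False,1)]) = 1"
    and "vpath n {1,m} (m, [(True,m),(False,m)]) \<and> rho m c (m, [(True,m),(False,m)]) = Nm 1
     \<and> psrc (m, [(True,m),(False,m)]) = m \<and> ptgt (m, [(True,m),(False,m)]) = m"
    and "vpath n {1,m} (1, map (\<lambda>j. (True,j)) [1..<m]) \<and> rho m c (1, map (\<lambda>j. (True,j)) [1..<m]) = Nm 1
     \<and> psrc (1, map (\<lambda>j. (True,j)) [1..<m]) = 1 \<and> ptgt (1, map (\<lambda>j. (True,j)) [1..<m]) = m"
    and "vpath n {1,m} (m, map (\<lambda>j. (False,j)) (rev [1..<m])) \<and> rho m c (m, map (\<lambda>j. (False,j)) (rev [1..<m])) = Nm c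
     \<and> psrc (m, map (\<lambda>j. (False,j)) (rev [1..<m])) = m \<and> ptgt (m, map (\<lambda>j. (False,j)) (rev [1..<m])) = 1"
proof -
  show "vpath n {1,m} (1, [(True,1),(False,1)]) \<and> rho m c (1, [(True,1),(False,1)]) = Nm 1
     \<and> psrc (1, [(True,1),(False,1)]) = 1 \<and> ptgt (1, [(True,1),(False,1)]) = 1"
    using assms by (auto simp: vpath_def psrc_def ptgt_def rho_def gsc_def arr_ok_def arr_src_def arr_tgt_def)
  show "vpath n {1,m} (m, [(True,m),(False,m)]) \<and> rho m c (m, [(True,m),(False,m)]) = Nm 1
     \<and> psrc (m, [(True,m),(False,m)]) = m \<and> ptgt (m, [(True,m),(False,m)]) = m"
    using assms by (auto simp: vpath_def psrc_def ptgt_def rho_def gsc_def arr_ok_def arr_src_def arr_tgt_def)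
  have u: "walk n 1 (map (\<lambda>j. (True, j)) [1..<m]) \<and> walk_end 1 (map (\<lambda>j. (True, j)) [1..<m]) = m"
    using walk_up[of 1 m n] assms by auto
  show "vpath n {1,m} (1, map (\<lambda>j. (True,j)) [1..<m]) \<and> rho m c (1, map (\<lambda>j. (True,j)) [1..<m]) = Nm 1
     \<and> psrc (1, map (\<lambda>j. (True,j)) [1..<m]) = 1 \<and> ptgt (1, map (\<lambda>j. (True,j)) [1..<m]) = m"
    using assms u by (auto simp: vpath_def psrc_def ptgt_def rho_def gsc_def)
  have d: "walk n m (map (\<lambda>j. (False, j)) (rev [1..<m])) \<and> walk_end m (map (\<lambda>j. (False, j)) (rev [1..<m])) = 1"
    using walk_down[of 1 m n] assms by auto
  show "vpath n {1,m} (m, map (\<lambda>j. (False,j)) (rev [1..<m])) \<and> rho m c (m, map (\<lambda>j. (False,j)) (rev [1..<m])) = Nm c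
     \<and> psrc (m, map (\<lambda>j. (False,j)) (rev [1..<m])) = m \<and> ptgt (m, map (\<lambda>j. (False,j)) (rev [1..<m])) = 1"
    using assms d by (auto simp: vpath_def psrc_def ptgt_def rho_def gsc_def)
qed

definition trunc2 :: "'a::field mat \<Rightarrow> 'a mat" where
  "trunc2 M = mat (dim_row M) 2 (\<lambda>(i,j). row M i $ j)"

lemma trunc2: "B \<in> carrier_mat 2 k \<Longrightarrow> M * B = trunc2 M * B"
  by (rule eq_matI) (auto simp: trunc2_def scalar_prod_def)

lemma trunc2_carrier: "dim_row M = 2 \<Longrightarrow> trunc2 M \<in> carrier_mat 2 2"
  by (simp add: trunc2_def)

lemma Rfam_indec:
  assumes m: "3 \<le> m" "m \<le> n - 1"
  shows "indecomposable n {m} (Rfam m (c::'a::field))"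
proof -
  have I: "idem_set {m} = {1, m}" by (simp add: idem_set_def)
  have rep: "is_rep n {m} (Rfam m c)" by (rule Rfam_rep[OF m])
  have nz: "rep_nonzero {m} (Rfam m c)" unfolding rep_nonzero_def Rfam_def idem_set_def by force
  have "\<not> (\<exists>R1 R2. is_rep n {m} R1 \<and> is_rep n {m} R2 \<and> rep_nonzero {m} R1 \<and> rep_nonzero {m} R2
                \<and> rep_iso n {m} (Rfam m c) (rep_sum R1 R2))"
  proof
    assume "\<exists>R1 R2. is_rep n {m} R1 \<and> is_rep n {m} R2 \<and> rep_nonzero {m} R1 \<and> rep_nonzero {m} R2
                \<and> rep_iso n {m} (Rfam m c) (rep_sum R1 R2)"
    then obtain R1 R2 :: "(nat \<Rightarrow> nat) \<times> (qpath \<Rightarrow> 'a mat)" where r1: "is_rep n {m} R1" and r2: "is_rep n {m} R2"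
      and nz1: "rep_nonzero {m} R1" and nz2: "rep_nonzero {m} R2" and iso: "rep_iso n {m} (Rfam m c) (rep_sum R1 R2)"
      by blast
    define SB where "SB p = four_block_mat (snd R1 p) (0\<^sub>m (fst R1 (ptgt p)) (fst R2 (psrc p)))
                         (0\<^sub>m (fst R2 (ptgt p)) (fst R1 (psrc p))) (snd R2 p)" for p
    from iso obtain \<phi> where
      \<phi>c: "\<forall>i\<in>{1,m}. \<phi> i \<in> carrier_mat (fst R1 i + fst R2 i) 2 \<and> invertible_mat (\<phi> i)"
      and \<phi>h: "\<forall>p. vpath n {1,m} p \<longrightarrow> \<phi> (ptgt p) * rho m c p = SB p * \<phi> (psrc p)"
      unfolding rep_iso_def rep_sum_def Rfam_def I SB_def by auto
    have inv: "\<forall>i\<in>{1,m}. \<exists>B. fst R1 i + fst R2 i = 2 \<and> B \<in> carrier_mat 2 2 \<and> \<phi> i * B = 1\<^sub>m 2 \<and> B * \<phi> i = 1\<^sub>m 2"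
    proof
      fix i assume i: "i \<in> {1,m}"
      have c: "\<phi> i \<in> carrier_mat (fst R1 i + fst R2 i) 2" "invertible_mat (\<phi> i)" using \<phi>c i by auto
      from inv_obtain[OF c(2) c(1)] obtain B where "fst R1 i + fst R2 i = 2" "B \<in> carrier_mat 2 2"
        "\<phi> i * B = 1\<^sub>m 2" "B * \<phi> i = 1\<^sub>m 2" by auto
      then show "\<exists>B. fst R1 i + fst R2 i = 2 \<and> B \<in> carrier_mat 2 2 \<and> \<phi> i * B = 1\<^sub>m 2 \<and> B * \<phi> i = 1\<^sub>m 2"
        by blast
    qed
    from bchoice[OF inv] obtain B where B: "\<forall>i\<in>{1,m}. fst R1 i + fst R2 i = 2 \<and> B i \<in> carrier_mat 2 2 \<and> \<phi> i * B i = 1\<^sub>m 2 \<and> B i * \<phi> i = 1\<^sub>m 2"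
      by blast
    have \<phi>2: "i \<in> {1,m} \<Longrightarrow> \<phi> i \<in> carrier_mat 2 2" for i
    proof -
      assume i: "i \<in> {1,m}"
      have "fst R1 i + fst R2 i = 2" using B i by blast
      then show ?thesis using \<phi>c i by auto
    qed
    define P :: "nat \<Rightarrow> 'a mat" where "P i = four_block_mat (1\<^sub>m (fst R1 i)) (0\<^sub>m (fst R1 i) (fst R2 i))
        (0\<^sub>m (fst R2 i) (fst R1 i)) (0\<^sub>m (fst R2 i) (fst R2 i))" for i
    define E where "E i = B i * P i * \<phi> i" for i
    have Pc: "i \<in> {1,m} \<Longrightarrow> P i \<in> carrier_mat 2 2" for i
      using B four_block_carrier_mat[of "1\<^sub>m (fst R1 i)" "fst R1 i" "fst R1 i" "0\<^sub>m (fst R2 i) (fst R2 i)" "fst R2 i" "fst R2 i"]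
      unfolding P_def by auto
    have PP: "i \<in> {1,m} \<Longrightarrow> P i * P i = P i" for i
      unfolding P_def
      by (simp add: mult_four_block_mat[OF one_carrier_mat zero_carrier_mat zero_carrier_mat zero_carrier_mat
           one_carrier_mat zero_carrier_mat zero_carrier_mat zero_carrier_mat])
    have r1c: "vpath n {1,m} p \<Longrightarrow> snd R1 p \<in> carrier_mat (fst R1 (ptgt p)) (fst R1 (psrc p))" for p
      using r1 unfolding is_rep_def Let_def I by blast
    have r2c: "vpath n {1,m} p \<Longrightarrow> snd R2 p \<in> carrier_mat (fst R2 (ptgt p)) (fst R2 (psrc p))" for p
      using r2 unfolding is_rep_def Let_def I by blast
    have vI: "vpath n {1,m} p \<Longrightarrow> psrc p \<in> {1,m} \<and> ptgt p \<in> {1,m}" for p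
      by (simp add: vpath_def)
    have SBc: "vpath n {1,m} p \<Longrightarrow> SB p \<in> carrier_mat 2 2" for p
    proof -
      assume v: "vpath n {1,m} p"
      have s: "psrc p \<in> {1,m}" and t: "ptgt p \<in> {1,m}" using vI[OF v] by auto
      have "fst R1 (psrc p) + fst R2 (psrc p) = 2" "fst R1 (ptgt p) + fst R2 (ptgt p) = 2"
        using B s t by blast+
      then show ?thesis using four_block_carrier_mat[OF r1c[OF v] r2c[OF v]] unfolding SB_def by simp
    qed
    have SP: "vpath n {1,m} p \<Longrightarrow> P (ptgt p) * SB p = SB p * P (psrc p)" for p
    proof -
      assume v: "vpath n {1,m} p"
      note a = r1c[OF v] r2c[OF v]
      show ?thesis unfolding P_def SB_def
        using a
        by (simp add: mult_four_block_mat[OF one_carrier_mat zero_carrier_mat zero_carrier_mat zero_carrier_mat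
           a(1) zero_carrier_mat zero_carrier_mat a(2)]
         mult_four_block_mat[OF a(1) zero_carrier_mat zero_carrier_mat a(2)
           one_carrier_mat zero_carrier_mat zero_carrier_mat zero_carrier_mat])
    qed
    have Ecomm: "vpath n {1,m} p \<Longrightarrow> E (ptgt p) * rho m c p = rho m c p * E (psrc p)" for p
    proof -
      assume v: "vpath n {1,m} p"
      have s: "psrc p \<in> {1,m}" and t: "ptgt p \<in> {1,m}" using vI[OF v] by auto
      note bs = B[rule_format, OF s] and bt = B[rule_format, OF t]
      show ?thesis unfolding E_def
        by (rule conj_endo[where S = "SB p"])
          (simp_all add: \<phi>2[OF s] \<phi>2[OF t] bs bt Pc[OF s] Pc[OF t] SBc[OF v] SP[OF v] \<phi>h[rule_format, OF v])
    qed
    have Ec: "i \<in> {1,m} \<Longrightarrow> E i \<in> carrier_mat 2 2" for i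
    proof -
      assume i: "i \<in> {1,m}"
      show ?thesis unfolding E_def using B[rule_format, OF i] Pc[OF i] \<phi>2[OF i] by (simp add: mc22)
    qed
    have Eid: "i \<in> {1,m} \<Longrightarrow> E i * E i = E i" for i
    proof -
      assume i: "i \<in> {1,m}"
      note c = B[rule_format, OF i] Pc[OF i] \<phi>2[OF i]
      have "E i * E i = B i * (P i * (\<phi> i * (B i * (P i * \<phi> i))))"
        unfolding E_def using c by (simp add: mc22 assoc22)
      also have "\<dots> = B i * (P i * (P i * \<phi> i))" using c by (simp add: cancel2 mc22)
      also have "\<dots> = B i * ((P i * P i) * \<phi> i)" using c by (simp add: mc22 assoc22)
      also have "\<dots> = E i" unfolding E_def PP[OF i] using c by (simp add: mc22 assoc22)
      finally show ?thesis .
    qed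
    have PE: "i \<in> {1,m} \<Longrightarrow> P i = \<phi> i * E i * B i" for i
    proof -
      assume i: "i \<in> {1,m}"
      note c = B[rule_format, OF i] Pc[OF i] \<phi>2[OF i]
      have "\<phi> i * E i * B i = \<phi> i * (B i * (P i * (\<phi> i * B i)))"
        unfolding E_def using c by (simp add: mc22 assoc22)
      also have "\<dots> = P i" using c by (simp add: cancel2 mc22)
      finally show ?thesis by simp
    qed
    note p1 = paths(1)[OF m, of c] and p2 = paths(2)[OF m, of c] and p3 = paths(3)[OF m, of c]
    have e1: "E 1 * Nm 1 = Nm 1 * E 1" using Ecomm[of "(1, [(True,1),(False,1)])"] p1 by simp
    have e2: "E m * Nm 1 = Nm 1 * E m" using Ecomm[of "(m, [(True,m),(False,m)])"] p2 by simp
    have e3: "E m * Nm 1 = Nm 1 * E 1" using Ecomm[of "(1, map (\<lambda>j. (True,j)) [1..<m])"] p3 by simp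
    have f: "E 1 $$ (0,1) = 0 \<and> E 1 $$ (1,1) = E 1 $$ (0,0) \<and> E m $$ (0,1) = 0
     \<and> E m $$ (0,0) = E 1 $$ (0,0) \<and> E m $$ (1,1) = E 1 $$ (0,0)"
      by (rule endo_form[OF Ec Ec e1 e2 e3]) auto
    have i1: "(E 1 $$ (0,0) = 0 \<and> E 1 = 0\<^sub>m 2 2) \<or> (E 1 $$ (0,0) = 1 \<and> E 1 = 1\<^sub>m 2)"
      by (rule idem_form) (use Ec Eid f in auto)
    have i2: "(E m $$ (0,0) = 0 \<and> E m = 0\<^sub>m 2 2) \<or> (E m $$ (0,0) = 1 \<and> E m = 1\<^sub>m 2)"
      by (rule idem_form) (use Ec Eid f in auto)
    have both: "(E 1 = 0\<^sub>m 2 2 \<and> E m = 0\<^sub>m 2 2) \<or> (E 1 = 1\<^sub>m 2 \<and> E m = 1\<^sub>m 2)"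
      using i1 i2 f by auto
    obtain i where i: "i \<in> {1,m}" "fst R1 i > 0" using nz1 unfolding rep_nonzero_def I by auto
    obtain j where j: "j \<in> {1,m}" "fst R2 j > 0" using nz2 unfolding rep_nonzero_def I by auto
    show False
    proof (cases "E 1 = 0\<^sub>m 2 2 \<and> E m = 0\<^sub>m 2 2")
      case True
      then have "E i = 0\<^sub>m 2 2" using i by auto
      then have "P i = 0\<^sub>m 2 2" using PE[OF i(1)] \<phi>2[OF i(1)] B[rule_format, OF i(1)] left_mult_zero_mat[of "B i" 2 2] by simp
      moreover have "P i $$ (0,0) = 1" using i unfolding P_def by simp
      ultimately show False by simp
    next
      case False
      then have "E 1 = 1\<^sub>m 2 \<and> E m = 1\<^sub>m 2" using both by auto
      then have "E j = 1\<^sub>m 2" using j by auto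
      then have "P j = 1\<^sub>m 2" using PE[OF j(1)] \<phi>2[OF j(1)] B[rule_format, OF j(1)] by simp
      moreover have s2: "fst R1 j + fst R2 j = 2" using B j(1) by blast
      then have "fst R1 j < 2" using j(2) by linarith
      moreover have "P j $$ (fst R1 j, fst R1 j) = 0" using j(2) unfolding P_def by simp
      ultimately show False by simp
    qed
  qed
  then show ?thesis unfolding indecomposable_def using rep nz by blast
qed

lemma iso_data:
  assumes "rep_iso n {m} (Rfam m c) S"
  shows "\<exists>\<phi> B. (\<forall>i\<in>{1,m}. fst S i = 2 \<and> \<phi> i \<in> carrier_mat 2 2 \<and> B i \<in> carrier_mat 2 2
       \<and> \<phi> i * B i = 1\<^sub>m 2 \<and> B i * \<phi> i = 1\<^sub>m 2)
     \<and> (\<forall>p. vpath n {1,m} p \<longrightarrow> \<phi> (ptgt p) * rho m c p = snd S p * \<phi> (psrc p))"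
proof -
  have I: "idem_set {m} = {1, m}" by (simp add: idem_set_def)
  from assms obtain \<phi> where
    \<phi>c: "\<forall>i\<in>{1,m}. \<phi> i \<in> carrier_mat (fst S i) 2 \<and> invertible_mat (\<phi> i)"
    and \<phi>h: "\<forall>p. vpath n {1,m} p \<longrightarrow> \<phi> (ptgt p) * rho m c p = snd S p * \<phi> (psrc p)"
    unfolding rep_iso_def Rfam_def I by auto
  have inv: "\<forall>i\<in>{1,m}. \<exists>B. fst S i = 2 \<and> \<phi> i \<in> carrier_mat 2 2 \<and> B \<in> carrier_mat 2 2
       \<and> \<phi> i * B = 1\<^sub>m 2 \<and> B * \<phi> i = 1\<^sub>m 2"
  proof
    fix i assume i: "i \<in> {1,m}"
    have c: "\<phi> i \<in> carrier_mat (fst S i) 2" "invertible_mat (\<phi> i)" using \<phi>c i by auto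
    from inv_obtain[OF c(2) c(1)] obtain B where "fst S i = 2" "B \<in> carrier_mat (fst S i) (fst S i)"
      "\<phi> i * B = 1\<^sub>m (fst S i)" "B * \<phi> i = 1\<^sub>m (fst S i)" by auto
    then show "\<exists>B. fst S i = 2 \<and> \<phi> i \<in> carrier_mat 2 2 \<and> B \<in> carrier_mat 2 2
       \<and> \<phi> i * B = 1\<^sub>m 2 \<and> B * \<phi> i = 1\<^sub>m 2" using c(1) by auto
  qed
  from bchoice[OF inv] obtain B where "\<forall>i\<in>{1,m}. fst S i = 2 \<and> \<phi> i \<in> carrier_mat 2 2 \<and> B i \<in> carrier_mat 2 2
       \<and> \<phi> i * B i = 1\<^sub>m 2 \<and> B i * \<phi> i = 1\<^sub>m 2" by blast
  then show ?thesis using \<phi>h by blast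
qed

lemma mult00: "A \<in> carrier_mat 2 2 \<Longrightarrow> Y \<in> carrier_mat 2 2 \<Longrightarrow>
  (A * Y) $$ (0,0) = A $$ (0,0) * Y $$ (0,0) + A $$ (0,1) * Y $$ (1,0)"
  by (simp add: scalar_prod_def eval_nat_numeral)

lemma Rfam_noniso:
  assumes m: "3 \<le> m" "m \<le> n - 1"
    and i1: "rep_iso n {m} (Rfam m c) S" and i2: "rep_iso n {m} (Rfam m (c'::'a::field)) S"
  shows "c = c'"
proof -
  obtain \<phi> B where \<phi>: "\<forall>i\<in>{1,m}. fst S i = 2 \<and> \<phi> i \<in> carrier_mat 2 2 \<and> B i \<in> carrier_mat 2 2
       \<and> \<phi> i * B i = 1\<^sub>m 2 \<and> B i * \<phi> i = 1\<^sub>m 2"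
     and \<phi>h: "\<forall>p. vpath n {1,m} p \<longrightarrow> \<phi> (ptgt p) * rho m c p = snd S p * \<phi> (psrc p)"
    using iso_data[OF i1] by blast
  obtain \<psi> D where \<psi>: "\<forall>i\<in>{1,m}. fst S i = 2 \<and> \<psi> i \<in> carrier_mat 2 2 \<and> D i \<in> carrier_mat 2 2
       \<and> \<psi> i * D i = 1\<^sub>m 2 \<and> D i * \<psi> i = 1\<^sub>m 2"
     and \<psi>h: "\<forall>p. vpath n {1,m} p \<longrightarrow> \<psi> (ptgt p) * rho m c' p = snd S p * \<psi> (psrc p)"
    using iso_data[OF i2] by blast
  define X where "X i = B i * \<psi> i" for i
  have Xc: "i \<in> {1,m} \<Longrightarrow> X i \<in> carrier_mat 2 2" for i
    unfolding X_def using \<phi> \<psi> by (auto intro: mc22)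
  have Xcomm: "X (ptgt p) * rho m c' p = rho m c p * X (psrc p)" if v: "vpath n {1,m} p" for p
  proof -
    have s: "psrc p \<in> {1,m}" and t: "ptgt p \<in> {1,m}" using v unfolding vpath_def by blast+
    note ps = \<phi>[rule_format, OF s] and pt = \<phi>[rule_format, OF t]
    note qs = \<psi>[rule_format, OF s] and qt = \<psi>[rule_format, OF t]
    have e1: "\<phi> (ptgt p) * rho m c p = snd S p * \<phi> (psrc p)" by (rule \<phi>h[rule_format, OF v])
    have e2: "\<psi> (ptgt p) * rho m c' p = snd S p * \<psi> (psrc p)" by (rule \<psi>h[rule_format, OF v])
    have ptc: "\<phi> (ptgt p) \<in> carrier_mat 2 2" using pt by blast
    have "dim_row (\<phi> (ptgt p) * rho m c p) = 2" using ptc by simp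
    then have "dim_row (snd S p * \<phi> (psrc p)) = 2" by (simp only: e1)
    then have Tc: "trunc2 (snd S p) \<in> carrier_mat 2 2" by (simp add: trunc2_carrier)
    have e1': "\<phi> (ptgt p) * rho m c p = trunc2 (snd S p) * \<phi> (psrc p)"
      unfolding e1 by (rule trunc2[of "\<phi> (psrc p)" 2]) (use ps in blast)
    have e2': "\<psi> (ptgt p) * rho m c' p = trunc2 (snd S p) * \<psi> (psrc p)"
      unfolding e2 by (rule trunc2[of "\<psi> (psrc p)" 2]) (use qs in blast)
    show ?thesis unfolding X_def
      by (rule conj_iso[OF _ _ _ _ _ _ _ _ Tc e1' e2']) (use ps pt qs qt in auto)
  qed
  note p1 = paths(1)[OF m] and p2 = paths(2)[OF m] and p3 = paths(3)[OF m] and p4 = paths(4)[OF m]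
  have e1: "X 1 * Nm 1 = Nm 1 * X 1" using Xcomm[of "(1, [(True,1),(False,1)])"] p1[of c] p1[of c'] by simp
  have e2: "X m * Nm 1 = Nm 1 * X m" using Xcomm[of "(m, [(True,m),(False,m)])"] p2[of c] p2[of c'] by simp
  have e3: "X m * Nm 1 = Nm 1 * X 1" using Xcomm[of "(1, map (\<lambda>j. (True,j)) [1..<m])"] p3[of c] p3[of c'] by simp
  have e4: "X 1 * Nm c' = Nm c * X m" using Xcomm[of "(m, map (\<lambda>j. (False,j)) (rev [1..<m]))"] p4[of c] p4[of c'] by simp
  have X1: "X 1 \<in> carrier_mat 2 2" and Xm: "X m \<in> carrier_mat 2 2" using Xc by auto
  have f: "X 1 $$ (0,1) = 0 \<and> X 1 $$ (1,1) = X 1 $$ (0,0) \<and> X m $$ (0,1) = 0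
     \<and> X m $$ (0,0) = X 1 $$ (0,0) \<and> X m $$ (1,1) = X 1 $$ (0,0)"
    by (rule endo_form[OF X1 Xm e1 e2 e3])
  have b: "X 1 $$ (1,1) * c' = c * X m $$ (0,0)" by (rule beta_eq[OF X1 Xm e4])
  have a0: "X 1 $$ (0,0) \<noteq> 0"
  proof
    assume a: "X 1 $$ (0,0) = 0"
    note p = \<phi>[rule_format, of 1] \<psi>[rule_format, of 1]
    have "X 1 * (D 1 * \<phi> 1) = B 1 * (\<psi> 1 * (D 1 * \<phi> 1))" unfolding X_def using p by (simp add: assoc22 mc22)
    also have "\<dots> = B 1 * \<phi> 1" using p by (simp add: cancel2)
    also have "\<dots> = 1\<^sub>m 2" using p by simp
    finally have "(X 1 * (D 1 * \<phi> 1)) $$ (0,0) = 1" by simp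
    moreover have "(X 1 * (D 1 * \<phi> 1)) $$ (0,0) = X 1 $$ (0,0) * (D 1 * \<phi> 1) $$ (0,0) + X 1 $$ (0,1) * (D 1 * \<phi> 1) $$ (1,0)"
    proof (rule mult00[OF X1])
      show "D 1 * \<phi> 1 \<in> carrier_mat 2 2" using p by (intro mc22) blast+
    qed
    ultimately show False using a f by simp
  qed
  from b f have "X 1 $$ (0,0) * c' = X 1 $$ (0,0) * c" by (simp add: mult.commute)
  then show ?thesis using a0 by simp
qed

theorem lemma1:
  assumes "alg_closed TYPE('a::field)"
    and "n \<ge> 4" and "3 \<le> m" and "m \<le> n - 1"
  shows "infinite_rep_type TYPE('a) n {m}"
  unfolding infinite_rep_type_def
proof
  assume "\<exists>F :: ((nat \<Rightarrow> nat) \<times> (qpath \<Rightarrow> 'a mat)) set.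
      finite F \<and> (\<forall>R. indecomposable n {m} R \<longrightarrow> (\<exists>S\<in>F. rep_iso n {m} R S))"
  then obtain F :: "((nat \<Rightarrow> nat) \<times> (qpath \<Rightarrow> 'a mat)) set" where fin: "finite F"
    and cov: "\<forall>R. indecomposable n {m} R \<longrightarrow> (\<exists>S\<in>F. rep_iso n {m} R S)" by blast
  have "\<forall>c::'a. \<exists>S. S \<in> F \<and> rep_iso n {m} (Rfam m c) S"
  proof
    fix c :: 'a
    have "indecomposable n {m} (Rfam m c)" by (rule Rfam_indec[OF assms(3,4)])
    then obtain S where "S \<in> F" "rep_iso n {m} (Rfam m c) S" using cov by blast
    then show "\<exists>S. S \<in> F \<and> rep_iso n {m} (Rfam m c) S" by blast
  qed
  from choice[OF this] obtain f where f: "\<forall>c::'a. f c \<in> F \<and> rep_iso n {m} (Rfam m c) (f c)" by blast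
  have "inj f"
  proof (rule injI)
    fix c c' :: 'a assume "f c = f c'"
    then have "rep_iso n {m} (Rfam m c') (f c)" using f by simp
    moreover have "rep_iso n {m} (Rfam m c) (f c)" using f by simp
    ultimately show "c = c'" using Rfam_noniso[OF assms(3,4)] by blast
  qed
  moreover have "f ` UNIV \<subseteq> F" using f by auto
  ultimately have "finite (UNIV :: 'a set)" using fin finite_subset[of "f ` UNIV" F] finite_imageD[of f UNIV] by blast
  then show False using alg_closed_infinite[OF assms(1)] by simp
qed

end
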